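(* Let $Q(\mathbf{x})=\mathbf{x}^tM\mathbf{x}$ with $M\in M_d(\mathbb{Z})$ symmetric and $\det M\ne0$. For $g\in\mathrm{SL}_d(\mathbb{Z})$ and $\gamma\in\mathrm{SL}_{d-1}(\mathbb{Q})$, let $\hat g$ be the $d\times(d-1)$ matrix of the first $d-1$ columns of $g$ and $M_{\varphi_g^\gamma}=\gamma^t\hat g^tM^{-1}\hat g\gamma$ (the companion matrix of the form $\mathbf{u}\mapsto Q^*(\hat g\gamma\mathbf{u})$ on $\mathbb{Q}^{d-1}$, where $Q^*(\mathbf{x})=\mathbf{x}^tM^{-1}\mathbf{x}$). Then \[ \det(M_{\varphi_g^\gamma})=\frac{1}{\det M}\,Q(\tau(g)). \]
   Context: $\tau(g)=(g^t)^{-1}\mathbf{e}_d$. *)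

theory Defs
  imports "Jordan_Normal_Form.Gauss_Jordan_Elimination" "Jordan_Normal_Form.Determinant"
begin

definition minv :: "'a :: field mat \<Rightarrow> 'a mat" where
  "minv A = the (mat_inverse A)"

definition int_mat :: "rat mat \<Rightarrow> bool" where
  "int_mat A \<longleftrightarrow> (\<forall>i < dim_row A. \<forall>j < dim_col A. A $$ (i,j) \<in> \<int>)"

definition qform :: "'a :: comm_ring_1 mat \<Rightarrow> 'a vec \<Rightarrow> 'a" where
  "qform M x = x \<bullet> (M *\<^sub>v x)"

(* tau(g) = (g^t)^{-1} e_d, with e_d the last standard basis vector (index d-1, 0-based) *)
definition tau :: "nat \<Rightarrow> rat mat \<Rightarrow> rat vec" where
  "tau d g = minv (transpose_mat g) *\<^sub>v unit_vec d (d - 1)"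

definition ghat :: "nat \<Rightarrow> rat mat \<Rightarrow> rat mat" where
  "ghat d g = mat d (d - 1) (\<lambda>(i,j). g $$ (i,j))"

definition Mphi :: "nat \<Rightarrow> rat mat \<Rightarrow> rat mat \<Rightarrow> rat mat \<Rightarrow> rat mat" where
  "Mphi d M g \<gamma> = transpose_mat \<gamma> * transpose_mat (ghat d g) * minv M * ghat d g * \<gamma>"

end

theory Submission
  imports Defs
begin

lemma minv_props:
  fixes A :: "'a :: field mat"
  assumes A: "A \<in> carrier_mat n n" and d: "det A \<noteq> 0"
  shows "minv A \<in> carrier_mat n n" "A * minv A = 1\<^sub>m n" "minv A * A = 1\<^sub>m n"
proof -
  have "mat_inverse A \<noteq> None"
    by (metis mat_inverse(1)[OF A] det_non_zero_imp_unit[OF A d])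
  then obtain B where B: "mat_inverse A = Some B" by auto
  from mat_inverse(2)[OF A B] B show "minv A \<in> carrier_mat n n" "A * minv A = 1\<^sub>m n" "minv A * A = 1\<^sub>m n"
    unfolding minv_def by auto
qed

lemma minv_unique:
  fixes A :: "'a :: field mat"
  assumes A: "A \<in> carrier_mat n n" and d: "det A \<noteq> 0" and X: "X \<in> carrier_mat n n"
    and AX: "A * X = 1\<^sub>m n"
  shows "minv A = X"
proof -
  note m = minv_props[OF A d]
  have "X = (minv A * A) * X" using m X by simp
  also have "\<dots> = minv A * (A * X)" using m X A by (metis assoc_mult_mat)
  also have "\<dots> = minv A" using AX m by simp
  finally show ?thesis by simp
qed

theorem lemma6p2:
  fixes d :: nat and M g \<gamma> :: "rat mat"
  assumes "d \<ge> 1"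
    and "M \<in> carrier_mat d d" and "int_mat M" and "transpose_mat M = M" and "det M \<noteq> 0"
    and "g \<in> carrier_mat d d" and "int_mat g" and "det g = 1"
    and "\<gamma> \<in> carrier_mat (d - 1) (d - 1)" and "det \<gamma> = 1"
  shows "det (Mphi d M g \<gamma>) = qform M (tau d g) / det M"
proof -
  note Mc = assms(2) and gc = assms(6) and \<gamma>c = assms(9)
  define k where "k = d - 1"
  have dk: "d = Suc k" using assms(1) k_def by simp
  define N where "N = minv M"
  note Nm = minv_props[OF Mc assms(5), folded N_def]
  have Nc: "N \<in> carrier_mat d d" using Nm by simp
  define G where "G = ghat d g"
  have Gc: "G \<in> carrier_mat d k" unfolding G_def ghat_def k_def by simp
  define A where "A = transpose_mat g * N * g"
  have Ac: "A \<in> carrier_mat d d" unfolding A_def using Nc gc by simp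
  define C where "C = transpose_mat G * N * G"
  have Cc: "C \<in> carrier_mat k k" unfolding C_def using Nc Gc by simp
  have \<gamma>c': "\<gamma> \<in> carrier_mat k k" using \<gamma>c k_def by simp
  have "Mphi d M g \<gamma> = transpose_mat \<gamma> * C * \<gamma>"
  proof -
    have t: "transpose_mat \<gamma> \<in> carrier_mat k k" "transpose_mat G \<in> carrier_mat k d" using Gc \<gamma>c' by auto
    have "transpose_mat \<gamma> * transpose_mat G * N * G = transpose_mat \<gamma> * (transpose_mat G * N) * G"
      using t Nc by (subst assoc_mult_mat[of _ k k _ d _ d]) auto
    also have "\<dots> = transpose_mat \<gamma> * (transpose_mat G * N * G)"
      using t Nc Gc by (subst assoc_mult_mat[of _ k k _ d _ k]) auto
    finally show ?thesis unfolding Mphi_def C_def N_def[symmetric] G_def[symmetric] by simp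
  qed
  hence det1: "det (Mphi d M g \<gamma>) = det C"
    using Cc \<gamma>c' assms(10) by (simp add: det_mult[of _ k] det_transpose)
  have CA: "C = mat_delete A k k"
  proof (rule eq_matI)
    fix i j assume "i < dim_row (mat_delete A k k)" "j < dim_col (mat_delete A k k)"
    hence ij: "i < k" "j < k" using Ac k_def by auto
    have colG: "col G l = col g l" if "l < k" for l
      by (rule eq_vecI) (use Gc gc that dk in \<open>auto simp: G_def ghat_def\<close>)
    have e1: "(transpose_mat G * N) $$ (i, l) = (transpose_mat g * N) $$ (i, l)" if "l < d" for l
      using Gc gc Nc that ij colG[of i] dk by simp
    have r: "row (transpose_mat G * N) i = row (transpose_mat g * N) i"
      by (rule eq_vecI) (use Gc gc Nc ij e1 dk in auto)
    have "C $$ (i, j) = row (transpose_mat G * N) i \<bullet> col G j"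
      unfolding C_def using Gc Nc ij by (simp del: assoc_mult_mat)
    also have "\<dots> = row (transpose_mat g * N) i \<bullet> col g j" using r colG ij by simp
    also have "\<dots> = A $$ (i, j)" unfolding A_def using gc Nc ij dk by (simp del: assoc_mult_mat)
    finally show "C $$ (i, j) = mat_delete A k k $$ (i, j)"
      unfolding mat_delete_def using ij Ac dk by simp
  qed (use Cc Ac k_def in auto)
  have "det C = cofactor A k k" unfolding CA cofactor_def by simp
  also have "\<dots> = adj_mat A $$ (k, k)" unfolding adj_mat_def using Ac dk by simp
  finally have det2: "det (Mphi d M g \<gamma>) = adj_mat A $$ (k, k)" using det1 by simp
  define B where "B = minv (transpose_mat g)"
  have dg: "det (transpose_mat g) \<noteq> 0" using assms(8) gc by (simp add: det_transpose)
  note Bm = minv_props[OF _ dg, folded B_def, of d] 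
  have Bc: "B \<in> carrier_mat d d" using Bm gc by simp
  have gB: "g * transpose_mat B = 1\<^sub>m d"
  proof -
    have "transpose_mat (B * transpose_mat g) = 1\<^sub>m d" using Bm gc by simp
    thus ?thesis using Bc gc by (simp add: transpose_mult)
  qed
  have gB2: "transpose_mat g * B = 1\<^sub>m d" using Bm gc by simp
  define D where "D = transpose_mat B * (M * B)"
  have Dc: "D \<in> carrier_mat d d" unfolding D_def using Bc Mc by simp
  have detN: "det N = 1 / det M"
  proof -
    have "det (N * M) = 1" using Nm by simp
    hence "det N * det M = 1" using Nc Mc by (simp add: det_mult)
    thus ?thesis using assms(5) by (simp add: field_simps)
  qed
  have detA: "det A = 1 / det M" unfolding A_def using gc Nc assms(8) detN
    by (simp add: det_mult[of _ d] det_transpose)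
  have AD: "A * D = 1\<^sub>m d"
  proof -
    have tg: "transpose_mat g \<in> carrier_mat d d" "transpose_mat B \<in> carrier_mat d d" using gc Bc by auto
    have MB: "M * B \<in> carrier_mat d d" using Mc Bc by simp
    have TN: "transpose_mat g * N \<in> carrier_mat d d" using tg Nc by simp
    have "g * D = (g * transpose_mat B) * (M * B)" unfolding D_def
      using assoc_mult_mat[OF gc tg(2) MB] by simp
    also have "\<dots> = M * B" using gB left_mult_one_mat[OF MB] by simp
    finally have gD: "g * D = M * B" .
    have "A * D = (transpose_mat g * N) * (g * D)" unfolding A_def
      using assoc_mult_mat[OF TN gc Dc] .
    also have "\<dots> = transpose_mat g * (N * (M * B))" unfolding gD
      using assoc_mult_mat[OF tg(1) Nc MB] .
    also have "N * (M * B) = (N * M) * B" using assoc_mult_mat[OF Nc Mc Bc] by simp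
    also have "\<dots> = B" using Nm Bc by simp
    finally show ?thesis using gB2 by simp
  qed
  have minvA: "minv A = D" using minv_unique[OF Ac _ Dc AD] detA assms(5) by simp
  have adjA: "adj_mat A = det A \<cdot>\<^sub>m D"
  proof -
    have "adj_mat A = adj_mat A * (A * D)" using AD adj_mat(1)[OF Ac] by simp
    also have "\<dots> = (adj_mat A * A) * D" using adj_mat(1)[OF Ac] Ac Dc by (simp add: assoc_mult_mat)
    also have "\<dots> = det A \<cdot>\<^sub>m D" using adj_mat(3)[OF Ac] Dc mult_smult_assoc_mat[OF one_carrier_mat Dc] by simp
    finally show ?thesis .
  qed
  have tau: "tau d g = col B k"
  proof -
    have kd: "k < d" using dk by simp
    have "col (B * 1\<^sub>m d) k = B *\<^sub>v col (1\<^sub>m d) k" using col_mult2[OF Bc one_carrier_mat kd] .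
    also have "col (1\<^sub>m d) k = unit_vec d k" using col_one kd by simp
    finally show ?thesis unfolding tau_def B_def[symmetric] k_def[symmetric] using Bc by simp
  qed
  have "D $$ (k, k) = qform M (tau d g)"
    unfolding D_def qform_def tau using Bc Mc dk by (simp add: mult_mat_vec_def)
  thus ?thesis using det2 adjA Dc dk detA by simp
qed

end
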